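(* Let $\psi=(x,y,z):\Sigma\to\mathbb{R}^3$ be a $[\varphi,\vec e_3]$-minimal immersion and $\xi=u+iv$ a conformal parameter of $\Sigma$. Then the system $$x^*_\xi=-ie^{\varphi(z)}y_\xi,\qquad y^*_\xi=ie^{\varphi(z)}x_\xi,\qquad z^*_\xi=e^{\varphi(z)}z_\xi$$ for real functions $x^*,y^*,z^*$ is integrable: for each right-hand side $F\in\{-ie^{\varphi(z)}y_\xi,\ ie^{\varphi(z)}x_\xi,\ e^{\varphi(z)}z_\xi\}$ one has $\partial_{\bar\xi}F=\partial_\xi\overline{F}$ (i.e. the would-be mixed derivatives $x^*_{\xi\bar\xi}=x^*_{\bar\xi\xi}$, etc., agree).
   Context: $\varphi$ is a smooth function on an open interval $I$, $\vec e_3=(0,0,1)$. An immersion $\psi=(x,y,z):\Sigma\to\mathbb{R}^3$ with $z(\Sigma)\subseteq I$ is $[\varphi,\vec e_3]$-minimal if, regarding $\Sigma$ as a Riemann surface with the conformal structure of its induced metric, for every conformal parameter $\xi$: $2x_{\xi\bar\xi}+\dot\varphi(z)(z_\xi x_{\bar\xi}+z_{\bar\xi}x_\xi)=0$, $2y_{\xi\bar\xi}+\dot\varphi(z)(z_\xi y_{\bar\xi}+z_{\bar\xi}y_\xi)=0$, $2z_{\xi\bar\xi}-\dot\varphi(z)(|x_\xi|^2+|y_\xi|^2-|z_\xi|^2)=0$ (equivalently, its mean curvature vector is $\dot\varphi(z)\vec e_3^\perp$). *)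

theory Defs
  imports "HOL-Analysis.Analysis"
begin

text \<open>Local setting: a conformal parameter \<xi> = u + i v of \<Sigma> is a chart onto an open
  set U of the complex plane; the immersion is given in this chart by real functions x y z.\<close>

definition pu :: "(complex \<Rightarrow> 'a::real_normed_vector) \<Rightarrow> complex \<Rightarrow> 'a" where
  "pu f p = frechet_derivative f (at p) 1"

definition pv :: "(complex \<Rightarrow> 'a::real_normed_vector) \<Rightarrow> complex \<Rightarrow> 'a" where
  "pv f p = frechet_derivative f (at p) \<i>"

definition dxi :: "(complex \<Rightarrow> complex) \<Rightarrow> complex \<Rightarrow> complex" where
  "dxi f p = (pu f p - \<i> * pv f p) / 2"

definition dxib :: "(complex \<Rightarrow> complex) \<Rightarrow> complex \<Rightarrow> complex" where
  "dxib f p = (pu f p + \<i> * pv f p) / 2"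

fun Ck_on :: "nat \<Rightarrow> complex set \<Rightarrow> (complex \<Rightarrow> real) \<Rightarrow> bool" where
  "Ck_on 0 U f = continuous_on U f"
| "Ck_on (Suc k) U f = (f differentiable_on U \<and> Ck_on k U (pu f) \<and> Ck_on k U (pv f))"

definition smooth2_on :: "complex set \<Rightarrow> (complex \<Rightarrow> real) \<Rightarrow> bool" where
  "smooth2_on U f = (\<forall>k. Ck_on k U f)"

definition smooth1_on :: "real set \<Rightarrow> (real \<Rightarrow> real) \<Rightarrow> bool" where
  "smooth1_on I \<phi> = (\<forall>k. ((deriv ^^ k) \<phi>) differentiable_on I)"

definition cx :: "(complex \<Rightarrow> real) \<Rightarrow> complex \<Rightarrow> complex" where
  "cx f = (\<lambda>q. complex_of_real (f q))"

definition conformal_immersion ::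
  "complex set \<Rightarrow> (complex \<Rightarrow> real) \<Rightarrow> (complex \<Rightarrow> real) \<Rightarrow> (complex \<Rightarrow> real) \<Rightarrow> bool" where
  "conformal_immersion U x y z =
     (open U \<and> smooth2_on U x \<and> smooth2_on U y \<and> smooth2_on U z \<and>
      (\<forall>p\<in>U.
         (pu x p)\<^sup>2 + (pu y p)\<^sup>2 + (pu z p)\<^sup>2 = (pv x p)\<^sup>2 + (pv y p)\<^sup>2 + (pv z p)\<^sup>2 \<and>
         pu x p * pv x p + pu y p * pv y p + pu z p * pv z p = 0 \<and>
         (pu x p)\<^sup>2 + (pu y p)\<^sup>2 + (pu z p)\<^sup>2 > 0))"

definition phi_minimal ::
  "(real \<Rightarrow> real) \<Rightarrow> real set \<Rightarrow> complex set \<Rightarrow>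
   (complex \<Rightarrow> real) \<Rightarrow> (complex \<Rightarrow> real) \<Rightarrow> (complex \<Rightarrow> real) \<Rightarrow> bool" where
  "phi_minimal \<phi> I U x y z =
     (conformal_immersion U x y z \<and> z ` U \<subseteq> I \<and>
      (\<forall>p\<in>U.
        2 * dxib (dxi (cx x)) p + complex_of_real (deriv \<phi> (z p)) *
            (dxi (cx z) p * dxib (cx x) p + dxib (cx z) p * dxi (cx x) p) = 0 \<and>
        2 * dxib (dxi (cx y)) p + complex_of_real (deriv \<phi> (z p)) *
            (dxi (cx z) p * dxib (cx y) p + dxib (cx z) p * dxi (cx y) p) = 0 \<and>
        2 * dxib (dxi (cx z)) p - complex_of_real (deriv \<phi> (z p)) *
            complex_of_real ((cmod (dxi (cx x) p))\<^sup>2 + (cmod (dxi (cx y) p))\<^sup>2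
                             - (cmod (dxi (cx z) p))\<^sup>2) = 0))"

end

theory Submission
  imports Defs
begin

lemma fd_eval:
  assumes "(f has_derivative f') (at p)"
  shows "pu f p = f' 1" "pv f p = f' \<i>"
  using frechet_derivative_at[OF assms] by (simp_all add: pu_def pv_def)

lemma pu_local:
  assumes "open U" "p \<in> U" "\<And>q. q \<in> U \<Longrightarrow> f q = g q" "g differentiable (at p)"
  shows "pu f p = pu g p \<and> pv f p = pv g p"
proof -
  have "(g has_derivative frechet_derivative g (at p)) (at p)"
    using assms(4) frechet_derivative_works by blast
  then have "(f has_derivative frechet_derivative g (at p)) (at p)"
    by (rule has_derivative_transform_within_open[OF _ assms(1,2)]) (use assms(3) in auto)
  from fd_eval[OF this] show ?thesis by (simp add: pu_def pv_def)
qed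

lemma pu_mult:
  fixes a b :: "complex \<Rightarrow> complex"
  assumes "a differentiable (at p)" "b differentiable (at p)"
  shows "pu (\<lambda>q. a q * b q) p = a p * pu b p + pu a p * b p"
    "pv (\<lambda>q. a q * b q) p = a p * pv b p + pv a p * b p"
proof -
  have "((\<lambda>q. a q * b q) has_derivative
     (\<lambda>h. a p * frechet_derivative b (at p) h + frechet_derivative a (at p) h * b p)) (at p)"
    using has_derivative_mult[OF frechet_derivative_works[THEN iffD1, OF assms(1)]
        frechet_derivative_works[THEN iffD1, OF assms(2)]] by simp
  from fd_eval[OF this] show "pu (\<lambda>q. a q * b q) p = a p * pu b p + pu a p * b p"
    "pv (\<lambda>q. a q * b q) p = a p * pv b p + pv a p * b p" by (simp_all add: pu_def pv_def)
qed

lemma pu_cnj: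
  fixes a :: "complex \<Rightarrow> complex"
  assumes "a differentiable (at p)"
  shows "pu (\<lambda>q. cnj (a q)) p = cnj (pu a p)" "pv (\<lambda>q. cnj (a q)) p = cnj (pv a p)"
proof -
  have "((\<lambda>q. cnj (a q)) has_derivative (\<lambda>h. cnj (frechet_derivative a (at p) h))) (at p)"
    using has_derivative_cnj[OF frechet_derivative_works[THEN iffD1, OF assms(1)]] by simp
  from fd_eval[OF this] show "pu (\<lambda>q. cnj (a q)) p = cnj (pu a p)" "pv (\<lambda>q. cnj (a q)) p = cnj (pv a p)"
    by (simp_all add: pu_def pv_def)
qed

lemma pu_const: "pu (\<lambda>q. c) p = 0" "pv (\<lambda>q. c) p = 0"
  by (simp_all add: pu_def pv_def)

lemma pu_cx:
  fixes w :: "complex \<Rightarrow> real"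
  assumes "w differentiable (at p)"
  shows "pu (cx w) p = of_real (pu w p)" "pv (cx w) p = of_real (pv w p)"
    "cx w differentiable (at p)"
proof -
  have "(cx w has_derivative (\<lambda>h. of_real (frechet_derivative w (at p) h))) (at p)"
    unfolding cx_def
    using has_derivative_of_real[OF frechet_derivative_works[THEN iffD1, OF assms(1)]] by simp
  from fd_eval[OF this] this show "pu (cx w) p = of_real (pu w p)" "pv (cx w) p = of_real (pv w p)"
    "cx w differentiable (at p)"
    by (auto simp add: pu_def pv_def differentiable_def)
qed

lemma line_deriv:
  fixes w :: "complex \<Rightarrow> real"
  assumes "w differentiable (at (a + of_real s * b))"
  shows "((\<lambda>s. w (a + of_real s * b)) has_real_derivative
           frechet_derivative w (at (a + of_real s * b)) b) (at s)"
proof -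
  have lin: "linear (frechet_derivative w (at (a + of_real s * b)))"
    using linear_frechet_derivative assms .
  have g: "((\<lambda>s. a + of_real s * b) has_derivative (\<lambda>h. of_real h * b)) (at s)"
    by (auto intro!: derivative_eq_intros)
  have "((w \<circ> (\<lambda>s. a + of_real s * b)) has_derivative
         (frechet_derivative w (at (a + of_real s * b)) \<circ> (\<lambda>h. of_real h * b))) (at s)"
    using diff_chain_at[OF g] frechet_derivative_works[THEN iffD1, OF assms] by blast
  moreover have "(frechet_derivative w (at (a + of_real s * b)) \<circ> (\<lambda>h. of_real h * b))
      = (\<lambda>h. frechet_derivative w (at (a + of_real s * b)) b * h)"
  proof
    fix h :: real
    have "of_real h * b = h *\<^sub>R b" by (simp add: scaleR_conv_of_real)
    then show "(frechet_derivative w (at (a + of_real s * b)) \<circ> (\<lambda>h. of_real h * b)) h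
      = frechet_derivative w (at (a + of_real s * b)) b * h"
      using linear_scale[OF lin] by (simp add: mult.commute)
  qed
  ultimately show ?thesis by (simp add: has_field_derivative_def o_def)
qed

lemma schwarz:
  fixes f :: "complex \<Rightarrow> real"
  assumes U: "open U" "p \<in> U" and dd0: "f differentiable_on U"
    and dd1: "pu f differentiable_on U" and dd2: "pv f differentiable_on U"
    and c1: "continuous_on U (pv (pu f))" and c2: "continuous_on U (pu (pv f))"
  shows "pv (pu f) p = pu (pv f) p"
proof (rule ccontr)
  let ?A = "pv (pu f) p" and ?B = "pu (pv f) p"
  assume ne: "?A \<noteq> ?B"
  define e where "e = \<bar>?A - ?B\<bar> / 2"
  have e: "e > 0" using ne by (simp add: e_def)
  obtain r where r: "r > 0" "ball p r \<subseteq> U" using U openE by blast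
  obtain d1 where d1: "d1 > 0" "\<And>q. q \<in> U \<Longrightarrow> dist q p < d1 \<Longrightarrow> dist (pv (pu f) q) ?A < e"
    using c1 U(2) e unfolding continuous_on_iff by metis
  obtain d2 where d2: "d2 > 0" "\<And>q. q \<in> U \<Longrightarrow> dist q p < d2 \<Longrightarrow> dist (pu (pv f) q) ?B < e"
    using c2 U(2) e unfolding continuous_on_iff by metis
  define h where "h = min r (min d1 d2) / 3"
  have h: "h > 0" using r d1 d2 by (simp add: h_def)
  define P where "P s t = p + of_real s * 1 + of_real t * \<i>" for s t
  have Pin: "dist (P s t) p < min r (min d1 d2)" if "s \<in> {0..h}" "t \<in> {0..h}" for s t
  proof -
    have "dist (P s t) p = cmod (of_real s + of_real t * \<i>)" by (simp add: P_def dist_norm)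
    also have "\<dots> \<le> cmod (of_real s) + cmod (of_real t * \<i>)" by (rule norm_triangle_ineq)
    also have "\<dots> \<le> 2 * h" using that by (simp add: norm_mult)
    also have "\<dots> < min r (min d1 d2)" using h r d1 d2 unfolding h_def by linarith
    finally show ?thesis .
  qed
  have PU: "P s t \<in> U" if "s \<in> {0..h}" "t \<in> {0..h}" for s t
    using Pin[OF that] r by (auto simp: dist_commute subset_iff)
  have D0: "g differentiable (at (P s t))" if "g differentiable_on U" "s \<in> {0..h}" "t \<in> {0..h}"
    for g :: "complex \<Rightarrow> real" and s t
    using that PU differentiable_on_eq_differentiable_at[OF U(1)] by blast
  have du: "((\<lambda>s. g (P s t)) has_real_derivative pu g (P s t)) (at s)"
    if "g differentiable_on U" "s \<in> {0..h}" "t \<in> {0..h}" for g :: "complex \<Rightarrow> real" and s t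
  proof -
    have "g differentiable (at ((p + of_real t * \<i>) + of_real s * 1))"
      using D0[OF that] by (simp add: P_def algebra_simps)
    from line_deriv[OF this] show ?thesis by (simp add: P_def pu_def algebra_simps)
  qed
  have dv: "((\<lambda>t. g (P s t)) has_real_derivative pv g (P s t)) (at t)"
    if "g differentiable_on U" "s \<in> {0..h}" "t \<in> {0..h}" for g :: "complex \<Rightarrow> real" and s t
  proof -
    have "g differentiable (at ((p + of_real s * 1) + of_real t * \<i>))"
      using D0[OF that] by (simp add: P_def algebra_simps)
    from line_deriv[OF this] show ?thesis by (simp add: P_def pv_def algebra_simps)
  qed
  define D where "D = f (P h h) - f (P h 0) - f (P 0 h) + f (P 0 0)"
  have m1: "((\<lambda>s. f (P s h) - f (P s 0)) has_real_derivative pu f (P s h) - pu f (P s 0)) (at s)"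
    if "0 \<le> s" "s \<le> h" for s
    using du[OF dd0, of s h] du[OF dd0, of s 0] that h by (auto intro!: derivative_intros)
  obtain s1 where s1: "0 < s1" "s1 < h"
    "(f (P h h) - f (P h 0)) - (f (P 0 h) - f (P 0 0)) = (h - 0) * (pu f (P s1 h) - pu f (P s1 0))"
    using MVT2[of 0 h "\<lambda>s. f (P s h) - f (P s 0)" "\<lambda>s. pu f (P s h) - pu f (P s 0)"] h m1
    by auto
  have m2: "((\<lambda>t. pu f (P s1 t)) has_real_derivative pv (pu f) (P s1 t)) (at t)"
    if "0 \<le> t" "t \<le> h" for t
    using dv[OF dd1, of s1 t] that s1 by auto
  obtain t1 where t1: "0 < t1" "t1 < h"
    "pu f (P s1 h) - pu f (P s1 0) = (h - 0) * pv (pu f) (P s1 t1)"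
    using MVT2[of 0 h "\<lambda>t. pu f (P s1 t)" "\<lambda>t. pv (pu f) (P s1 t)"] h m2 by auto
  have m3: "((\<lambda>t. f (P h t) - f (P 0 t)) has_real_derivative pv f (P h t) - pv f (P 0 t)) (at t)"
    if "0 \<le> t" "t \<le> h" for t
    using dv[OF dd0, of h t] dv[OF dd0, of 0 t] that h by (auto intro!: derivative_intros)
  obtain t2 where t2: "0 < t2" "t2 < h"
    "(f (P h h) - f (P 0 h)) - (f (P h 0) - f (P 0 0)) = (h - 0) * (pv f (P h t2) - pv f (P 0 t2))"
    using MVT2[of 0 h "\<lambda>t. f (P h t) - f (P 0 t)" "\<lambda>t. pv f (P h t) - pv f (P 0 t)"] h m3
    by auto
  have m4: "((\<lambda>s. pv f (P s t2)) has_real_derivative pu (pv f) (P s t2)) (at s)"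
    if "0 \<le> s" "s \<le> h" for s
    using du[OF dd2, of s t2] that t2 by auto
  obtain s2 where s2: "0 < s2" "s2 < h"
    "pv f (P h t2) - pv f (P 0 t2) = (h - 0) * pu (pv f) (P s2 t2)"
    using MVT2[of 0 h "\<lambda>s. pv f (P s t2)" "\<lambda>s. pu (pv f) (P s t2)"] h m4 by auto
  have "h * (h * pv (pu f) (P s1 t1)) = h * (h * pu (pv f) (P s2 t2))"
    using s1(3) t1(3) t2(3) s2(3) by (simp add: algebra_simps)
  then have eq: "pv (pu f) (P s1 t1) = pu (pv f) (P s2 t2)" using h by simp
  have "dist (pv (pu f) (P s1 t1)) ?A < e"
    using d1(2)[OF PU[of s1 t1]] Pin[of s1 t1] s1 t1 by auto
  moreover have "dist (pu (pv f) (P s2 t2)) ?B < e"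
    using d2(2)[OF PU[of s2 t2]] Pin[of s2 t2] s2 t2 by auto
  ultimately have "\<bar>pv (pu f) (P s1 t1) - ?A\<bar> < \<bar>?A - ?B\<bar> / 2"
      "\<bar>pv (pu f) (P s1 t1) - ?B\<bar> < \<bar>?A - ?B\<bar> / 2"
    using eq unfolding e_def dist_real_def by auto
  moreover have "\<And>a A B :: real. \<bar>a - A\<bar> < \<bar>A - B\<bar> / 2 \<Longrightarrow> \<bar>a - B\<bar> < \<bar>A - B\<bar> / 2 \<Longrightarrow> False"
    by (auto simp: abs_if split: if_splits)
  ultimately show False by blast
qed

lemma pu_lin:
  fixes a b :: "complex \<Rightarrow> complex"
  assumes "a differentiable (at p)" "b differentiable (at p)"
  shows "pu (\<lambda>q. \<alpha> * a q + \<beta> * b q) p = \<alpha> * pu a p + \<beta> * pu b p"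
    "pv (\<lambda>q. \<alpha> * a q + \<beta> * b q) p = \<alpha> * pv a p + \<beta> * pv b p"
    "(\<lambda>q. \<alpha> * a q + \<beta> * b q) differentiable (at p)"
proof -
  have "((\<lambda>q. \<alpha> * a q + \<beta> * b q) has_derivative
     (\<lambda>h. \<alpha> * frechet_derivative a (at p) h + \<beta> * frechet_derivative b (at p) h)) (at p)"
    by (intro has_derivative_add has_derivative_mult_right
        frechet_derivative_works[THEN iffD1] assms)
  from fd_eval[OF this] this show
    "pu (\<lambda>q. \<alpha> * a q + \<beta> * b q) p = \<alpha> * pu a p + \<beta> * pu b p"
    "pv (\<lambda>q. \<alpha> * a q + \<beta> * b q) p = \<alpha> * pv a p + \<beta> * pv b p"
    "(\<lambda>q. \<alpha> * a q + \<beta> * b q) differentiable (at p)"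
    by (auto simp add: pu_def pv_def differentiable_def)
qed

lemma pu_exp_comp:
  fixes z :: "complex \<Rightarrow> real"
  assumes "z differentiable (at p)" "\<phi> differentiable (at (z p))"
  shows "pu (\<lambda>q. exp (\<phi> (z q))) p = exp (\<phi> (z p)) * deriv \<phi> (z p) * pu z p"
    "pv (\<lambda>q. exp (\<phi> (z q))) p = exp (\<phi> (z p)) * deriv \<phi> (z p) * pv z p"
    "(\<lambda>q. exp (\<phi> (z q))) differentiable (at p)"
proof -
  have "(\<phi> has_real_derivative deriv \<phi> (z p)) (at (z p))"
    using assms(2) DERIV_deriv_iff_real_differentiable by blast
  then have "((\<lambda>t. exp (\<phi> t)) has_real_derivative exp (\<phi> (z p)) * deriv \<phi> (z p)) (at (z p))"
    by (auto intro!: derivative_eq_intros)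
  then have "((\<lambda>t. exp (\<phi> t)) has_derivative (\<lambda>h. exp (\<phi> (z p)) * deriv \<phi> (z p) * h)) (at (z p))"
    by (rule has_field_derivative_imp_has_derivative)
  from diff_chain_at[OF frechet_derivative_works[THEN iffD1, OF assms(1)] this]
  have "((\<lambda>q. exp (\<phi> (z q))) has_derivative
     (\<lambda>h. exp (\<phi> (z p)) * deriv \<phi> (z p) * frechet_derivative z (at p) h)) (at p)"
    by (simp add: o_def)
  from fd_eval[OF this] this show
    "pu (\<lambda>q. exp (\<phi> (z q))) p = exp (\<phi> (z p)) * deriv \<phi> (z p) * pu z p"
    "pv (\<lambda>q. exp (\<phi> (z q))) p = exp (\<phi> (z p)) * deriv \<phi> (z p) * pv z p"
    "(\<lambda>q. exp (\<phi> (z q))) differentiable (at p)"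
    by (auto simp add: pu_def pv_def differentiable_def)
qed

lemma core:
  fixes w z :: "complex \<Rightarrow> real" and c :: complex and \<phi> :: "real \<Rightarrow> real"
  assumes U: "open U" "p \<in> U" and wd: "w differentiable_on U" "pu w differentiable_on U"
      "pv w differentiable_on U"
    and zd: "z differentiable (at p)" and phd: "\<phi> differentiable (at (z p))"
  defines "F \<equiv> \<lambda>q. c * complex_of_real (exp (\<phi> (z q))) * dxi (cx w) q"
  assumes Y0_def: "Y0 = (1/2) * complex_of_real (pu w p) + (- \<i>/2) * complex_of_real (pv w p)"
    and Yu_def: "Yu = (1/2) * complex_of_real (pu (pu w) p) + (- \<i>/2) * complex_of_real (pu (pv w) p)"
    and Yv_def: "Yv = (1/2) * complex_of_real (pv (pu w) p) + (- \<i>/2) * complex_of_real (pv (pv w) p)"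
    and Gu_def: "Gu = c * complex_of_real (exp (\<phi> (z p))) * Yu
              + c * complex_of_real (exp (\<phi> (z p)) * deriv \<phi> (z p) * pu z p) * Y0"
    and Gv_def: "Gv = c * complex_of_real (exp (\<phi> (z p))) * Yv
              + c * complex_of_real (exp (\<phi> (z p)) * deriv \<phi> (z p) * pv z p) * Y0"
  shows "dxib F p = (Gu + \<i> * Gv) / 2"
    "dxi (\<lambda>q. cnj (F q)) p = (cnj Gu - \<i> * cnj Gv) / 2"
    "dxib (dxi (cx w)) p = (Yu + \<i> * Yv) / 2"
    "dxi (cx w) p = Y0"
proof -
  have dq: "w differentiable (at q)" "pu w differentiable (at q)" "pv w differentiable (at q)"
    if "q \<in> U" for q
    using wd that differentiable_on_eq_differentiable_at[OF U(1)] by blast+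
  define Yg where "Yg = (\<lambda>q. (1/2) * cx (pu w) q + (- \<i>/2) * cx (pv w) q)"
  have Yeq: "dxi (cx w) q = Yg q" if "q \<in> U" for q
    using pu_cx[OF dq(1)[OF that]] by (simp add: dxi_def Yg_def cx_def field_simps)
  note cxu = pu_cx[OF dq(2)[OF U(2)]] and cxv = pu_cx[OF dq(3)[OF U(2)]]
  have Ygd: "Yg differentiable (at p)"
    using pu_lin(3)[OF cxu(3) cxv(3), of "1/2" "- \<i>/2"] by (simp add: Yg_def)
  have Ygu: "pu Yg p = Yu" and Ygv: "pv Yg p = Yv"
    using pu_lin(1,2)[OF cxu(3) cxv(3), of "1/2" "- \<i>/2"] cxu cxv
    by (simp_all add: Yg_def Yu_def Yv_def)
  have Yg0: "Yg p = Y0" by (simp add: Yg_def Y0_def cx_def)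
  define e where "e = cx (\<lambda>q. exp (\<phi> (z q)))"
  note ee = pu_exp_comp[OF zd phd]
  note ec = pu_cx[OF ee(3)]
  have ed: "e differentiable (at p)" using ec(3) by (simp add: e_def)
  have ceu: "pu (\<lambda>q. c * e q) p = c * complex_of_real (exp (\<phi> (z p)) * deriv \<phi> (z p) * pu z p)"
    and cev: "pv (\<lambda>q. c * e q) p = c * complex_of_real (exp (\<phi> (z p)) * deriv \<phi> (z p) * pv z p)"
    using pu_mult[of "\<lambda>q. c" p e] ed ec ee by (simp_all add: pu_const e_def)
  have ced: "(\<lambda>q. c * e q) differentiable (at p)" using ed by simp
  define G where "G = (\<lambda>q. c * e q * Yg q)"
  have Gd: "G differentiable (at p)" using ced Ygd unfolding G_def by simp
  have FG: "F q = G q" if "q \<in> U" for q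
    using Yeq[OF that] by (simp add: F_def G_def e_def cx_def)
  have Gu: "pu G p = Gu" and Gv: "pv G p = Gv"
    using pu_mult[OF ced Ygd] ceu cev Ygu Ygv Yg0
    by (simp_all add: G_def Gu_def Gv_def e_def cx_def algebra_simps)
  have FGl: "pu F p = Gu \<and> pv F p = Gv"
    using pu_local[OF U FG Gd] Gu Gv by simp
  have cGd: "(\<lambda>q. cnj (G q)) differentiable (at p)" using Gd differentiable_cnj_iff by blast
  have cFGl: "pu (\<lambda>q. cnj (F q)) p = cnj Gu \<and> pv (\<lambda>q. cnj (F q)) p = cnj Gv"
    using pu_local[OF U _ cGd, of "\<lambda>q. cnj (F q)"] FG pu_cnj[OF Gd] Gu Gv by simp
  have Yl: "pu (dxi (cx w)) p = Yu \<and> pv (dxi (cx w)) p = Yv"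
    using pu_local[OF U Yeq Ygd] Ygu Ygv by simp
  show "dxib F p = (Gu + \<i> * Gv) / 2" using FGl by (simp add: dxib_def)
  show "dxi (\<lambda>q. cnj (F q)) p = (cnj Gu - \<i> * cnj Gv) / 2" using cFGl by (simp add: dxi_def)
  show "dxib (dxi (cx w)) p = (Yu + \<i> * Yv) / 2" using Yl by (simp add: dxib_def)
  show "dxi (cx w) p = Y0" using Yeq[OF U(2)] Yg0 by simp
qed

lemma Ck2:
  assumes "Ck_on 2 U f"
  shows "f differentiable_on U" "pu f differentiable_on U" "pv f differentiable_on U"
    "continuous_on U (pv (pu f))" "continuous_on U (pu (pv f))"
  using assms by (simp_all add: numeral_2_eq_2)

theorem proposition1:
  fixes \<phi> :: "real \<Rightarrow> real" and I :: "real set" and U :: "complex set"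
    and x y z :: "complex \<Rightarrow> real"
  assumes "open I" and "is_interval I" and "smooth1_on I \<phi>"
    and "phi_minimal \<phi> I U x y z"
  defines "F1 \<equiv> (\<lambda>q. - \<i> * complex_of_real (exp (\<phi> (z q))) * dxi (cx y) q)"
    and "F2 \<equiv> (\<lambda>q. \<i> * complex_of_real (exp (\<phi> (z q))) * dxi (cx x) q)"
    and "F3 \<equiv> (\<lambda>q. complex_of_real (exp (\<phi> (z q))) * dxi (cx z) q)"
  shows "\<forall>p\<in>U. dxib F1 p = dxi (\<lambda>q. cnj (F1 q)) p
              \<and> dxib F2 p = dxi (\<lambda>q. cnj (F2 q)) p
              \<and> dxib F3 p = dxi (\<lambda>q. cnj (F3 q)) p"
proof
  fix p assume pU: "p \<in> U"
  have U: "open U" and sx: "Ck_on 2 U x" and sy: "Ck_on 2 U y" and sz: "Ck_on 2 U z"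
    and zI: "z p \<in> I" and mins: "\<forall>p\<in>U.
        2 * dxib (dxi (cx x)) p + complex_of_real (deriv \<phi> (z p)) *
            (dxi (cx z) p * dxib (cx x) p + dxib (cx z) p * dxi (cx x) p) = 0 \<and>
        2 * dxib (dxi (cx y)) p + complex_of_real (deriv \<phi> (z p)) *
            (dxi (cx z) p * dxib (cx y) p + dxib (cx z) p * dxi (cx y) p) = 0"
    using assms(4) pU unfolding phi_minimal_def conformal_immersion_def smooth2_on_def by auto
  have mx: "2 * dxib (dxi (cx x)) p + complex_of_real (deriv \<phi> (z p)) *
            (dxi (cx z) p * dxib (cx x) p + dxib (cx z) p * dxi (cx x) p) = 0"
   and my: "2 * dxib (dxi (cx y)) p + complex_of_real (deriv \<phi> (z p)) *
            (dxi (cx z) p * dxib (cx y) p + dxib (cx z) p * dxi (cx y) p) = 0"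
    using mins pU by auto
  have phd: "\<phi> differentiable (at (z p))"
  proof -
    have "\<phi> differentiable_on I" using assms(3) unfolding smooth1_on_def
      by (metis funpow_0)
    then show ?thesis using differentiable_on_eq_differentiable_at[OF assms(1)] zI by blast
  qed
  have dat: "f differentiable (at p)" if "f differentiable_on U" for f :: "complex \<Rightarrow> real"
    using that differentiable_on_eq_differentiable_at[OF U] pU by blast
  have zd: "z differentiable (at p)" using dat[OF Ck2(1)[OF sz]] .
  have zc: "dxi (cx z) p = (complex_of_real (pu z p) - \<i> * complex_of_real (pv z p)) / 2"
           "dxib (cx z) p = (complex_of_real (pu z p) + \<i> * complex_of_real (pv z p)) / 2"
    using pu_cx[OF zd] by (simp_all add: dxi_def dxib_def)
  have xc: "dxib (cx x) p = (complex_of_real (pu x p) + \<i> * complex_of_real (pv x p)) / 2"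
    using pu_cx[OF dat[OF Ck2(1)[OF sx]]] by (simp_all add: dxi_def dxib_def)
  have yc: "dxib (cx y) p = (complex_of_real (pu y p) + \<i> * complex_of_real (pv y p)) / 2"
    using pu_cx[OF dat[OF Ck2(1)[OF sy]]] by (simp_all add: dxi_def dxib_def)
  have schx: "pv (pu x) p = pu (pv x) p" using schwarz[OF U pU Ck2[OF sx]] .
  have schy: "pv (pu y) p = pu (pv y) p" using schwarz[OF U pU Ck2[OF sy]] .
  have schz: "pv (pu z) p = pu (pv z) p" using schwarz[OF U pU Ck2[OF sz]] .
  note c1 = core[where c="- \<i>", OF U pU Ck2(1-3)[OF sy] zd phd refl refl refl refl refl]
  note c2 = core[where c="\<i>", OF U pU Ck2(1-3)[OF sx] zd phd refl refl refl refl refl]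
  note c3 = core[where c="1", OF U pU Ck2(1-3)[OF sz] zd phd refl refl refl refl refl]
  have "dxib F1 p = dxi (\<lambda>q. cnj (F1 q)) p"
  proof -
    have R: "Re (2 * dxib (dxi (cx y)) p + complex_of_real (deriv \<phi> (z p)) *
            (dxi (cx z) p * dxib (cx y) p + dxib (cx z) p * dxi (cx y) p)) = 0"
      using my by simp
    have K: "pu (pu y) p + pv (pv y) p + deriv \<phi> (z p) * (pu y p * pu z p + pv y p * pv z p) = 0"
      using R unfolding c1(3) c1(4) zc yc
      by (simp add: algebra_simps) (simp add: field_simps)
    have K2: "2 * exp (\<phi> (z p)) * (pu (pu y) p + pv (pv y) p + deriv \<phi> (z p) * (pu y p * pu z p + pv y p * pv z p)) = 0"
      using K by simp
    show ?thesis
      using schy K2 unfolding F1_def c1(1) c1(2)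
      by (simp add: complex_eq_iff algebra_simps)
  qed
  moreover have "dxib F2 p = dxi (\<lambda>q. cnj (F2 q)) p"
  proof -
    have R: "Re (2 * dxib (dxi (cx x)) p + complex_of_real (deriv \<phi> (z p)) *
            (dxi (cx z) p * dxib (cx x) p + dxib (cx z) p * dxi (cx x) p)) = 0"
      using mx by simp
    have K: "pu (pu x) p + pv (pv x) p + deriv \<phi> (z p) * (pu x p * pu z p + pv x p * pv z p) = 0"
      using R unfolding c2(3) c2(4) zc xc
      by (simp add: algebra_simps) (simp add: field_simps)
    have K2: "2 * exp (\<phi> (z p)) * (pu (pu x) p + pv (pv x) p + deriv \<phi> (z p) * (pu x p * pu z p + pv x p * pv z p)) = 0"
      using K by simp
    show ?thesis
      using schx K2 unfolding F2_def c2(1) c2(2)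
      by (simp add: complex_eq_iff algebra_simps) (simp add: field_simps)
  qed
  moreover have "dxib F3 p = dxi (\<lambda>q. cnj (F3 q)) p"
    using schz unfolding F3_def
      using c3(1,2) by (simp add: complex_eq_iff algebra_simps)
  ultimately show "dxib F1 p = dxi (\<lambda>q. cnj (F1 q)) p
              \<and> dxib F2 p = dxi (\<lambda>q. cnj (F2 q)) p
              \<and> dxib F3 p = dxi (\<lambda>q. cnj (F3 q)) p" by blast
qed

end
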